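(* For $\nu,\lambda\in\mathbb C$ and integers $0\le k\le n$, \[ d^k_n(\nu)=\sum_{j=0}^{n-k}\binom{n-k}{j}\,d^k_{n-j}(\lambda)\,(\nu-\lambda)^j. \]
   Context: For $\lambda\in\mathbb C$ and integers $0\le k\le n$, define $e^k_n(\lambda)$ by $e^n_n(\lambda)=n!$ and, for $1\le k\le n$, $e^{k-1}_n(\lambda)=e^k_n(\lambda)+(\lambda-1)e^{k-1}_{n-1}(\lambda)$. Put $d^k_n(\lambda)=e^k_n(\lambda)/k!$. *)

theory Defs
  imports Complex_Main
begin

text \<open>e_coef lam k n = e^k_n(lam), meaningful for k \<le> n.
  e^n_n = n!; for k < n: e^k_n = e^(k+1)_n + (lam - 1) e^k_(n-1)
  (this is the defining recursion with k-1 replaced by k).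
  Values for k > n are irrelevant junk (set to n!).\<close>
function e_coef :: "complex \<Rightarrow> nat \<Rightarrow> nat \<Rightarrow> complex" where
  "e_coef lam k n =
     (if n \<le> k then of_nat (fact n)
      else e_coef lam (Suc k) n + (lam - 1) * e_coef lam k (n - 1))"
  by auto
termination by (relation "measure (\<lambda>(lam, k, n). n - k)") auto

declare e_coef.simps [simp del]

definition d_coef :: "complex \<Rightarrow> nat \<Rightarrow> nat \<Rightarrow> complex" where
  "d_coef lam k n = e_coef lam k n / of_nat (fact k)"

end

theory Submission
  imports Defs
begin

lemma e_step: "k < n \<Longrightarrow> e_coef lam k n = e_coef lam (Suc k) n + (lam - 1) * e_coef lam k (n - 1)"
  by (subst e_coef.simps) simp

lemma e_diag: "e_coef lam k k = of_nat (fact k)"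
  by (subst e_coef.simps) simp

lemma binom_split:
  fixes f :: "nat \<Rightarrow> complex"
  shows "(\<Sum>j\<le>Suc m. of_nat (Suc m choose j) * f j) =
     (\<Sum>j\<le>m. of_nat (m choose j) * f j) + (\<Sum>j\<le>m. of_nat (m choose j) * f (Suc j))"
proof -
  have "(\<Sum>j\<le>Suc m. of_nat (Suc m choose j) * f j) =
      f 0 + (\<Sum>j<Suc m. of_nat (Suc m choose Suc j) * f (Suc j))"
    by (subst sum.atMost_Suc_shift) (simp add: lessThan_Suc_atMost)
  also have "\<dots> = f 0 + (\<Sum>j\<le>m. of_nat (m choose Suc j) * f (Suc j)) + (\<Sum>j\<le>m. of_nat (m choose j) * f (Suc j))"
    by (simp add: lessThan_Suc_atMost sum.distrib distrib_right)
  also have "(\<Sum>j\<le>m. of_nat (m choose Suc j) * f (Suc j)) = (\<Sum>j<m. of_nat (m choose Suc j) * f (Suc j))"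
    by (simp add: lessThan_Suc_atMost[symmetric])
  also have "f 0 + (\<Sum>j<m. of_nat (m choose Suc j) * f (Suc j)) = (\<Sum>j\<le>m. of_nat (m choose j) * f j)"
  proof (cases m)
    case 0 then show ?thesis by simp
  next
    case (Suc m')
    show ?thesis unfolding Suc
      by (subst sum.atMost_Suc_shift) (simp add: lessThan_Suc_atMost)
  qed
  finally show ?thesis by (simp add: algebra_simps)
qed

lemma main_e:
  fixes nu lam :: complex
  shows "n = k + m \<Longrightarrow> e_coef nu k n =
    (\<Sum>j\<le>m. of_nat (m choose j) * e_coef lam k (n - j) * (nu - lam) ^ j)"
proof (induction m arbitrary: k n)
  case 0
  then show ?case by (simp add: e_diag)
next
  case (Suc m)
  show ?case
  proof -
    have n: "n = k + Suc m" by fact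
    define x where "x = nu - lam"
    define a where "a j = e_coef lam k (n - j) * x ^ j" for j
    have "e_coef nu k n = e_coef nu (Suc k) n + (nu - 1) * e_coef nu k (n - 1)"
      using n by (simp add: e_step)
    also have "e_coef nu (Suc k) n = (\<Sum>j\<le>m. of_nat (m choose j) * e_coef lam (Suc k) (n - j) * x ^ j)"
      using Suc.IH[of n "Suc k"] n x_def by simp
    also have "e_coef nu k (n - 1) = (\<Sum>j\<le>m. of_nat (m choose j) * e_coef lam k (n - 1 - j) * x ^ j)"
      using Suc.IH[of "n - 1" k] n x_def by simp
    finally have L: "e_coef nu k n = (\<Sum>j\<le>m. of_nat (m choose j) * e_coef lam (Suc k) (n - j) * x ^ j)
       + ((lam - 1) + x) * (\<Sum>j\<le>m. of_nat (m choose j) * e_coef lam k (n - 1 - j) * x ^ j)"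
      by (simp add: x_def)
    have R: "(\<Sum>j\<le>Suc m. of_nat (Suc m choose j) * a j) =
       (\<Sum>j\<le>m. of_nat (m choose j) * a j) + (\<Sum>j\<le>m. of_nat (m choose j) * a (Suc j))"
      by (rule binom_split)
    have A: "(\<Sum>j\<le>m. of_nat (m choose j) * a j) =
       (\<Sum>j\<le>m. of_nat (m choose j) * e_coef lam (Suc k) (n - j) * x ^ j)
       + (lam - 1) * (\<Sum>j\<le>m. of_nat (m choose j) * e_coef lam k (n - 1 - j) * x ^ j)"
    proof -
      have "(\<Sum>j\<le>m. of_nat (m choose j) * a j) = (\<Sum>j\<le>m. of_nat (m choose j) * e_coef lam (Suc k) (n - j) * x ^ j
          + (lam - 1) * (of_nat (m choose j) * e_coef lam k (n - 1 - j) * x ^ j))"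
      proof (rule sum.cong)
        fix j assume "j \<in> {..m}"
        then have "k < n - j" using n by simp
        then have E: "e_coef lam k (n - j) = e_coef lam (Suc k) (n - j) + (lam - 1) * e_coef lam k (n - 1 - j)"
          by (simp add: e_step diff_commute)
        then show "of_nat (m choose j) * a j = of_nat (m choose j) * e_coef lam (Suc k) (n - j) * x ^ j
          + (lam - 1) * (of_nat (m choose j) * e_coef lam k (n - 1 - j) * x ^ j)"
          unfolding a_def E by (simp add: algebra_simps)
      qed simp
      then show ?thesis by (simp add: sum.distrib sum_distrib_left)
    qed
    have B: "(\<Sum>j\<le>m. of_nat (m choose j) * a (Suc j)) =
       x * (\<Sum>j\<le>m. of_nat (m choose j) * e_coef lam k (n - 1 - j) * x ^ j)"
      by (simp add: a_def sum_distrib_left algebra_simps)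
    have T: "(\<Sum>j\<le>Suc m. of_nat (Suc m choose j) * e_coef lam k (n - j) * (nu - lam) ^ j)
       = (\<Sum>j\<le>Suc m. of_nat (Suc m choose j) * a j)"
      by (simp add: a_def x_def mult.assoc)
    show ?thesis unfolding T R A B L by (simp add: algebra_simps)
  qed
qed

theorem mainTheorem7:
  fixes nu lam :: complex and k n :: nat
  assumes "k \<le> n"
  shows "d_coef nu k n =
    (\<Sum>j=0..n-k. of_nat (n - k choose j) * d_coef lam k (n - j) * (nu - lam) ^ j)"
proof -
  have "e_coef nu k n = (\<Sum>j\<le>n-k. of_nat (n - k choose j) * e_coef lam k (n - j) * (nu - lam) ^ j)"
    using main_e[where nu=nu and lam=lam and m="n-k" and k=k and n=n] assms by simp
  then show ?thesis
    unfolding d_coef_def atLeast0AtMost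
    by (simp add: sum_divide_distrib)
qed

end
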